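(* Let $n,k$ be positive integers with $n\geq k$ and $n\geq 3(n-k)$, and let $i\in\{0,1,\dots,n-k\}$. Then for every $C\in\mathcal{K}_k(n)$, the diagram $\alpha_{n,k,i}(C)$ lies in $\mathcal{K}_{k+1}(n+1)$.
   Context: A linear chord diagram of size $n$ is a partition of $\{1,2,\dots,2n\}$ into blocks of size two, called chords. For a chord $c=\{s_c,e_c\}$ with $s_c<e_c$, $s_c$ is its start point, $e_c$ its end point, and its length is $e_c-s_c$. $\mathcal{K}_k(n)$ is the set of all linear chord diagrams of size $n$ in which every chord has length at least $k$. Let $M_{n,k}=\{k+1,\dots,2n-k\}$, and for a diagram $C$ of size $n$ let $S_C$ be the set of chords of $C$ with neither endpoint in $M_{n,k}$. The map $\alpha_{n,k,i}$ is defined on $C\in\mathcal{K}_k(n)$ as follows. Insert a new chord $c$ whose start point is placed immediately before $M_{n,k}$ (between positions $k$ and $k+1$) and whose end point is placed immediately after $M_{n,k}$ (between positions $2n-k$ and $2n-k+1$), keeping the relative order of all original points, and relabel the points $1,\dots,2n+2$; so $c=\{k+1,2n-k+2\}$. Then repeatedly swap the start point of $c$ with the nearest start point to its left belonging to a chord of $S_C$ (i.e., the two chords exchange these start positions), stopping when exactly $i$ start points of chords of $S_C$ lie to the left of the start point of $c$. The resulting diagram of size $n+1$ is $\alpha_{n,k,i}(C)$. (Under the hypotheses, $|S_C|\ge n-k$, so this is well defined.) *)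

theory Defs
  imports Main
begin

definition is_diagram :: "nat \<Rightarrow> (nat \<times> nat) set \<Rightarrow> bool" where
  "is_diagram n C \<longleftrightarrow>
     (\<forall>c\<in>C. fst c < snd c \<and> fst c \<in> {1..2*n} \<and> snd c \<in> {1..2*n}) \<and>
     (\<forall>p\<in>{1..2*n}. \<exists>!c\<in>C. p = fst c \<or> p = snd c)"

definition K :: "nat \<Rightarrow> nat \<Rightarrow> (nat \<times> nat) set set" where
  "K k n = {C. is_diagram n C \<and> (\<forall>c\<in>C. snd c - fst c \<ge> k)}"

definition Mset :: "nat \<Rightarrow> nat \<Rightarrow> nat set" where
  "Mset n k = {k+1..2*n-k}"

definition Sch :: "nat \<Rightarrow> nat \<Rightarrow> (nat \<times> nat) set \<Rightarrow> (nat \<times> nat) set" where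
  "Sch n k C = {c\<in>C. fst c \<notin> Mset n k \<and> snd c \<notin> Mset n k}"

text \<open>Relabelling of old points after inserting a point before and after M_{n,k}.\<close>
definition shift :: "nat \<Rightarrow> nat \<Rightarrow> nat \<Rightarrow> nat" where
  "shift n k p = (if p \<le> k then p else if p \<le> 2*n-k then p+1 else p+2)"

definition insert_chord :: "nat \<Rightarrow> nat \<Rightarrow> (nat \<times> nat) set \<Rightarrow> (nat \<times> nat) set" where
  "insert_chord n k C =
     (\<lambda>(s,e). (shift n k s, shift n k e)) ` C \<union> {(k+1, 2*n-k+2)}"

text \<open>One swap: the new chord c has end point e0; chords of S_C are recognised
  by their end points (the set E, which never changes during swapping).\<close>
definition swap_step :: "nat set \<Rightarrow> nat \<Rightarrow> (nat \<times> nat) set \<Rightarrow> (nat \<times> nat) set" where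
  "swap_step E e0 D =
     (let x = (THE s. (s,e0) \<in> D);
          p = Max {s. \<exists>e\<in>E. (s,e) \<in> D \<and> s < x};
          ep = (THE e. (p,e) \<in> D)
      in (D - {(x,e0),(p,ep)}) \<union> {(p,e0),(x,ep)})"

text \<open>alpha_{n,k,i}: insert c, then swap until exactly i start points of S_C-chords
  lie left of the start of c. Each swap decreases this count by exactly one, so
  this is (initial count - i) swaps.\<close>
definition alpha :: "nat \<Rightarrow> nat \<Rightarrow> nat \<Rightarrow> (nat \<times> nat) set \<Rightarrow> (nat \<times> nat) set" where
  "alpha n k i C =
     (let D0 = insert_chord n k C;
          E = shift n k ` (snd ` Sch n k C);
          m = card {d \<in> D0. snd d \<in> E \<and> fst d < k+1}
      in (swap_step E (2*n-k+2) ^^ (m - i)) D0)"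

end

theory Submission imports Defs begin

lemma diag_swap:
  assumes D: "is_diagram N D" and ab: "(a,b) \<in> D" and ce: "(c,e) \<in> D"
    and ne: "(a,b) \<noteq> (c,e)" and cb: "c < b" and ae: "a < e"
  shows "is_diagram N (D - {(a,b),(c,e)} \<union> {(c,b),(a,e)})"
proof -
  have bnd: "\<forall>x\<in>D. fst x < snd x \<and> fst x \<in> {1..2*N} \<and> snd x \<in> {1..2*N}"
   and cov: "\<forall>p\<in>{1..2*N}. \<exists>!x\<in>D. p = fst x \<or> p = snd x"
    using D unfolding is_diagram_def by auto
  have abb: "a \<in> {1..2*N}" "b \<in> {1..2*N}" "c \<in> {1..2*N}" "e \<in> {1..2*N}"
    using bnd ab ce by force+
  have uniq: "\<And>p x y. x \<in> D \<Longrightarrow> y \<in> D \<Longrightarrow> p = fst x \<or> p = snd x \<Longrightarrow> p = fst y \<or> p = snd y \<Longrightarrow> x = y"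
  proof -
    fix p x y assume "x \<in> D" "y \<in> D" "p = fst x \<or> p = snd x" "p = fst y \<or> p = snd y"
    moreover have "p \<in> {1..2*N}" using bnd calculation by force
    ultimately show "x = y" using cov by metis
  qed
  have ac: "a \<noteq> c"
  proof
    assume "a = c" then show False using uniq[OF ab ce, of a] ne by simp
  qed
  have ae': "a \<noteq> e"
  proof
    assume "a = e" then show False using uniq[OF ab ce, of a] ne by simp
  qed
  have bc: "b \<noteq> c"
  proof
    assume "b = c" then show False using uniq[OF ab ce, of b] ne by simp
  qed
  have be: "b \<noteq> e"
  proof
    assume "b = e" then show False using uniq[OF ab ce, of b] ne by simp
  qed
  have ablt: "a < b" "c < e" using bnd ab ce by force+
  let ?D = "D - {(a,b),(c,e)} \<union> {(c,b),(a,e)}"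
  show ?thesis unfolding is_diagram_def
  proof (rule conjI; intro ballI)
    fix x assume "x \<in> ?D"
    then consider "x \<in> D" | "x = (c,b)" | "x = (a,e)" by blast
    then show "fst x < snd x \<and> fst x \<in> {1..2*N} \<and> snd x \<in> {1..2*N}"
    proof cases
      case 1 then show ?thesis using bnd by blast
    next
      case 2 then show ?thesis using abb cb by simp
    next
      case 3 then show ?thesis using abb ae by simp
    qed
  next
    fix p assume p: "p \<in> {1..2*N}"
    then obtain y where y: "y \<in> D" "p = fst y \<or> p = snd y" using cov by blast
    show "\<exists>!x\<in>?D. p = fst x \<or> p = snd x"
    proof (cases "y = (a,b) \<or> y = (c,e)")
      case True
      then have pin: "p \<in> {a,b,c,e}" using y by auto
      show ?thesis
      proof (rule ex_ex1I)
        show "\<exists>x. x \<in> ?D \<and> (p = fst x \<or> p = snd x)" using pin by auto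
      next
        fix x1 x2 assume h: "x1 \<in> ?D \<and> (p = fst x1 \<or> p = snd x1)" "x2 \<in> ?D \<and> (p = fst x2 \<or> p = snd x2)"
        have old: "\<And>x. x \<in> D - {(a,b),(c,e)} \<Longrightarrow> p = fst x \<or> p = snd x \<Longrightarrow> False"
        proof -
          fix x assume "x \<in> D - {(a,b),(c,e)}" "p = fst x \<or> p = snd x"
          then show False using uniq[OF _ y(1), of x p] y True by auto
        qed
        have "x1 \<in> {(c,b),(a,e)}" using h(1) old by blast
        moreover have "x2 \<in> {(c,b),(a,e)}" using h(2) old by blast
        ultimately show "x1 = x2" using h ac ae' bc be ablt by auto
      qed
    next
      case False
      have yD: "y \<in> ?D" using False y by auto
      show ?thesis
      proof (rule ex1I[of _ y])
        show "y \<in> ?D \<and> (p = fst y \<or> p = snd y)" using yD y by auto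
      next
        fix x assume h: "x \<in> ?D \<and> (p = fst x \<or> p = snd x)"
        show "x = y"
        proof (cases "x \<in> D - {(a,b),(c,e)}")
          case True then show ?thesis using uniq[OF _ y(1), of x p] h y(2) by blast
        next
          case False2: False
          then have "x = (c,b) \<or> x = (a,e)" using h by auto
          then have "p \<in> {a,b,c,e}" using h by auto
          then have "y = (a,b) \<or> y = (c,e)"
            using uniq[OF ab y(1), of p] uniq[OF ce y(1), of p] y(2) by auto
          then show ?thesis using False by auto
        qed
      qed
    qed
  qed
qed

lemma diag_uniq:
  assumes D: "is_diagram N D" and "x \<in> D" "y \<in> D" "p = fst x \<or> p = snd x" "p = fst y \<or> p = snd y"
  shows "x = y"
proof -
  have bnd: "\<forall>x\<in>D. fst x < snd x \<and> fst x \<in> {1..2*N} \<and> snd x \<in> {1..2*N}"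
   and cov: "\<forall>p\<in>{1..2*N}. \<exists>!x\<in>D. p = fst x \<or> p = snd x"
    using D unfolding is_diagram_def by auto
  have "fst x \<in> {1..2*N}" "snd x \<in> {1..2*N}" using bnd assms(2) by blast+
  then have "p \<in> {1..2*N}" using assms(4) by blast
  then have "\<exists>!x\<in>D. p = fst x \<or> p = snd x" using cov by blast
  then obtain z where z: "\<And>y. y \<in> D \<Longrightarrow> p = fst y \<or> p = snd y \<Longrightarrow> y = z" by blast
  show ?thesis using z[OF assms(2,4)] z[OF assms(3,5)] by simp
qed

lemma diag_bnd:
  assumes D: "is_diagram N D" and "(a,b) \<in> D"
  shows "a < b" "1 \<le> a" "b \<le> 2*N"
proof -
  have "fst (a,b) < snd (a,b) \<and> fst (a,b) \<in> {1..2*N} \<and> snd (a,b) \<in> {1..2*N}"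
    using assms unfolding is_diagram_def by blast
  then show "a < b" "1 \<le> a" "b \<le> 2*N" by auto
qed

lemma diag_cov:
  assumes D: "is_diagram N D" and "1 \<le> q" "q \<le> 2*N"
  obtains a b where "(a,b) \<in> D" "q = a \<or> q = b"
proof -
  have "q \<in> {1..2*N}" using assms by simp
  then have "\<exists>x\<in>D. q = fst x \<or> q = snd x" using D unfolding is_diagram_def by blast
  then obtain x where "x \<in> D" "q = fst x \<or> q = snd x" by blast
  then show ?thesis using that[of "fst x" "snd x"] by simp
qed

lemma diag_finite:
  assumes D: "is_diagram N D" shows "finite D"
proof -
  have "D \<subseteq> {1..2*N} \<times> {1..2*N}"
  proof
    fix x assume "x \<in> D" then show "x \<in> {1..2*N} \<times> {1..2*N}" using diag_bnd[OF D, of "fst x" "snd x"] by (simp add: mem_Times_iff)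
  qed
  then show ?thesis by (rule finite_subset) simp
qed

locale L4 =
  fixes n k i :: nat and C :: "(nat\<times>nat) set"
  assumes k0: "0<k" and kn: "k\<le>n" and d3: "3*(n-k) \<le> n" and ii: "i \<le> n-k"
    and CK: "C \<in> K k n"
begin

lemma twod: "2*(n-k) \<le> k" using kn d3 by linarith

lemma Cdiag: "is_diagram n C" using CK unfolding K_def by blast

lemma Cb: assumes "(a,b) \<in> C" shows "a < b" "1 \<le> a" "b \<le> 2*n" "a + k \<le> b"
proof -
  have "snd (a,b) - fst (a,b) \<ge> k" using CK assms unfolding K_def by blast
  then show "a < b" "1 \<le> a" "b \<le> 2*n" "a + k \<le> b" using diag_bnd[OF Cdiag assms] by auto
qed

lemma Cuniq: "(a,b)\<in>C \<Longrightarrow> (a',b')\<in>C \<Longrightarrow> q = a \<or> q = b \<Longrightarrow> q = a' \<or> q = b' \<Longrightarrow> a = a' \<and> b = b'"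
  using diag_uniq[OF Cdiag, of "(a,b)" "(a',b')" q] by auto

lemma Cfin: "finite C" using diag_finite[OF Cdiag] .

lemma Sch_iff: "(a,b) \<in> Sch n k C \<longleftrightarrow> (a,b)\<in>C \<and> a \<le> k \<and> 2*n-k < b"
proof
  assume "(a,b) \<in> Sch n k C"
  then show "(a,b)\<in>C \<and> a \<le> k \<and> 2*n-k < b" unfolding Sch_def Mset_def using Cb[of a b] kn by auto
next
  assume "(a,b)\<in>C \<and> a \<le> k \<and> 2*n-k < b"
  then show "(a,b) \<in> Sch n k C" unfolding Sch_def Mset_def by auto
qed

definition LM where "LM = {c\<in>C. snd c \<le> 2*n-k}"
definition MR where "MR = {c\<in>C. k < fst c}"

lemma LM_fst: "(a,b) \<in> LM \<Longrightarrow> a \<le> 2*(n-k)"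
  unfolding LM_def using Cb[of a b] kn by auto

lemma count_LM: "card LM \<le> n-k \<and> k - (n-k) \<le> card (Sch n k C)"
proof -
  let ?S = "Sch n k C"
  have fin: "finite LM" "finite MR" "finite ?S" using Cfin unfolding LM_def MR_def Sch_def by auto
  have injf: "inj_on fst C"
  proof (rule inj_onI)
    fix x y assume h: "x \<in> C" "y \<in> C" "fst x = fst y"
    obtain a b a' b' where xy: "x = (a,b)" "y = (a',b')" by force
    show "x = y" using Cuniq[of a b a' b' a] h xy by simp
  qed
  have injs: "inj_on snd C"
  proof (rule inj_onI)
    fix x y assume h: "x \<in> C" "y \<in> C" "snd x = snd y"
    obtain a b a' b' where xy: "x = (a,b)" "y = (a',b')" by force
    show "x = y" using Cuniq[of a b a' b' b] h xy by simp
  qed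
  have sub: "LM \<subseteq> C" "MR \<subseteq> C" "?S \<subseteq> C" unfolding LM_def MR_def Sch_def by auto
  have A: "{1..k} \<subseteq> fst ` ?S \<union> fst ` LM"
  proof
    fix q assume q: "q \<in> {1..k}"
    then obtain a b where ab: "(a,b) \<in> C" "q = a \<or> q = b"
      using diag_cov[OF Cdiag, of q] kn by auto
    have "q = a" using ab Cb[OF ab(1)] q k0 by auto
    then show "q \<in> fst ` ?S \<union> fst ` LM"
      using ab q Sch_iff[of a b] unfolding LM_def by (cases "b \<le> 2*n-k") force+
  qed
  have A': "k \<le> card ?S + card LM"
  proof -
    have "k = card {1..k}" by simp
    also have "\<dots> \<le> card (fst ` ?S \<union> fst ` LM)" by (rule card_mono) (use A fin in auto)
    also have "\<dots> \<le> card (fst ` ?S) + card (fst ` LM)" by (rule card_Un_le)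
    also have "\<dots> \<le> card ?S + card LM" by (intro add_mono card_image_le fin)
    finally show ?thesis .
  qed
  have B: "{2*n-k+1..2*n} \<subseteq> snd ` ?S \<union> snd ` MR"
  proof
    fix q assume q: "q \<in> {2*n-k+1..2*n}"
    then obtain a b where ab: "(a,b) \<in> C" "q = a \<or> q = b"
      using diag_cov[OF Cdiag, of q] kn by auto
    have "q = b" using ab Cb[OF ab(1)] q k0 by auto
    then show "q \<in> snd ` ?S \<union> snd ` MR"
      using ab q Sch_iff[of a b] unfolding MR_def by (cases "a \<le> k") force+
  qed
  have B': "k \<le> card ?S + card MR"
  proof -
    have "k = card {2*n-k+1..2*n}" using kn by simp
    also have "\<dots> \<le> card (snd ` ?S \<union> snd ` MR)" by (rule card_mono) (use B fin in auto)
    also have "\<dots> \<le> card (snd ` ?S) + card (snd ` MR)" by (rule card_Un_le)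
    also have "\<dots> \<le> card ?S + card MR" by (intro add_mono card_image_le fin)
    finally show ?thesis .
  qed
  have C': "card LM + card ?S \<le> k"
  proof -
    have dis: "LM \<inter> ?S = {}" unfolding LM_def using Sch_iff by auto
    have "card LM + card ?S = card (LM \<union> ?S)" using card_Un_disjoint[OF fin(1) fin(3) dis] by simp
    also have "\<dots> = card (fst ` (LM \<union> ?S))"
      by (rule card_image[symmetric]) (rule inj_on_subset[OF injf], use sub in auto)
    also have "\<dots> \<le> card {1..k}"
    proof (rule card_mono)
      show "fst ` (LM \<union> ?S) \<subseteq> {1..k}"
      proof
        fix q assume "q \<in> fst ` (LM \<union> ?S)"
        then obtain a b where "(a,b) \<in> LM \<union> ?S" "q = a" by force
        then show "q \<in> {1..k}" using LM_fst[of a b] twod Sch_iff[of a b] Cb[of a b] sub by auto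
      qed
    qed simp
    finally show ?thesis by simp
  qed
  have D': "card LM + card MR \<le> 2*(n-k)"
  proof -
    have dis: "snd ` LM \<inter> fst ` MR = {}"
    proof (rule ccontr)
      assume "snd ` LM \<inter> fst ` MR \<noteq> {}"
      then obtain a b a' b' where "(a,b) \<in> LM" "(a',b') \<in> MR" "b = a'" by force
      then show False using Cuniq[of a b a' b' b] Cb[of a b] sub by auto
    qed
    have "card LM + card MR = card (snd ` LM) + card (fst ` MR)"
      using card_image[OF inj_on_subset[OF injs sub(1)]] card_image[OF inj_on_subset[OF injf sub(2)]] by simp
    also have "\<dots> = card (snd ` LM \<union> fst ` MR)" using card_Un_disjoint[OF _ _ dis] fin by simp
    also have "\<dots> \<le> card {k+1..2*n-k}"
    proof (rule card_mono)
      show "snd ` LM \<union> fst ` MR \<subseteq> {k+1..2*n-k}"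
      proof
        fix q assume "q \<in> snd ` LM \<union> fst ` MR"
        then obtain a b where "(a,b) \<in> LM \<and> q = b \<or> (a,b) \<in> MR \<and> q = a" by force
        then show "q \<in> {k+1..2*n-k}" using Cb[of a b] sub unfolding LM_def MR_def by auto
      qed
    qed simp
    finally show ?thesis using kn by simp
  qed
  show ?thesis using A' B' C' D' by linarith
qed


abbreviation sh where "sh \<equiv> shift n k"
abbreviation e0 where "e0 \<equiv> 2*n-k+2"
abbreviation E where "E \<equiv> shift n k ` (snd ` Sch n k C)"
abbreviation D0 where "D0 \<equiv> insert_chord n k C"

lemma sh_inj: "sh a = sh b \<Longrightarrow> a = b"
  unfolding shift_def by (auto split: if_splits)

lemma sh_mono: "a < b \<Longrightarrow> sh a < sh b"
  unfolding shift_def by (auto split: if_splits)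

lemma sh_ne1: "sh a \<noteq> k+1"
proof (cases "a \<le> k")
  case True then show ?thesis unfolding shift_def by simp
next
  case False
  then have "k+1 < sh a" unfolding shift_def by simp
  then show ?thesis by simp
qed

lemma sh_ne2: "sh a \<noteq> e0"
proof (cases "a \<le> 2*n-k")
  case True then have "sh a \<le> 2*n-k+1" unfolding shift_def by simp
  then show ?thesis by simp
next
  case False
  then have "sh a = a+2" unfolding shift_def using kn by simp
  then show ?thesis using False by simp
qed

lemma sh_R: "2*n-k < b \<Longrightarrow> sh b = b+2"
  unfolding shift_def using kn by auto

lemma sh_L: "b \<le> k \<Longrightarrow> sh b = b"
  unfolding shift_def by auto

lemma sh_M: "k < b \<Longrightarrow> b \<le> 2*n-k \<Longrightarrow> sh b = b+1"
  unfolding shift_def by auto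

lemma E_iff: "e \<in> E \<longleftrightarrow> (\<exists>a b. (a,b) \<in> Sch n k C \<and> e = b+2)"
proof
  assume "e \<in> E"
  then obtain a b where "(a,b) \<in> Sch n k C" "e = sh b" by force
  then show "\<exists>a b. (a,b) \<in> Sch n k C \<and> e = b+2" using Sch_iff sh_R by blast
next
  assume "\<exists>a b. (a,b) \<in> Sch n k C \<and> e = b+2"
  then obtain a b where ab: "(a,b) \<in> Sch n k C" "e = b+2" by blast
  then have "e = sh b" using Sch_iff sh_R by simp
  then show "e \<in> E" using ab by force
qed

lemma E_ge: assumes "e \<in> E" shows "2*n-k+3 \<le> e"
proof -
  obtain a b where ab: "(a,b) \<in> Sch n k C" "e = b+2" using E_iff assms by blast
  then have "2*n-k < b" using Sch_iff by blast
  then show ?thesis using ab(2) by simp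
qed

lemma e0_notin: "e0 \<notin> E"
proof
  assume "e0 \<in> E" then have "2*n-k+3 \<le> e0" by (rule E_ge)
  then show False by simp
qed

lemma D0_iff: "(s,e) \<in> D0 \<longleftrightarrow> (s,e) = (k+1,e0) \<or> (\<exists>a b. (a,b)\<in>C \<and> s = sh a \<and> e = sh b)"
  unfolding insert_chord_def by force

lemma shE: assumes "(a,b) \<in> C" shows "sh b \<in> E \<longleftrightarrow> (a,b) \<in> Sch n k C"
proof
  assume "sh b \<in> E"
  then obtain a' b' where ab': "(a',b') \<in> Sch n k C" "sh b = sh b'" by force
  then have "b = b'" using sh_inj by blast
  then have "a = a'" using Cuniq[of a b a' b' b] assms ab' Sch_iff by auto
  then show "(a,b) \<in> Sch n k C" using ab' \<open>b = b'\<close> by simp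
next
  assume "(a,b) \<in> Sch n k C" then show "sh b \<in> E" by force
qed

lemma F3: "(s,e) \<in> D0 \<Longrightarrow> e \<in> E \<Longrightarrow> s+k+2 \<le> e"
proof -
  assume h: "(s,e) \<in> D0" "e \<in> E"
  have "(s,e) \<noteq> (k+1,e0)"
  proof
    assume "(s,e) = (k+1,e0)" then have "e = e0" by simp
    then show False using h(2) e0_notin by argo
  qed
  then obtain a b where ab: "(a,b)\<in>C" "s = sh a" "e = sh b" using D0_iff h(1) by blast
  then have S: "(a,b) \<in> Sch n k C" using shE[OF ab(1)] h(2) by argo
  then show ?thesis using ab Sch_iff[of a b] sh_R[of b] sh_L[of a] Cb[of a b] by simp
qed

lemma F4: assumes "(s,e) \<in> D0" "e \<notin> E" "e \<noteq> e0"
  shows "s+k+1 \<le> e" "k+1 < e" "s \<le> k \<Longrightarrow> s \<in> fst ` LM"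
proof -
  have "(s,e) \<noteq> (k+1,e0)" using assms(3) by auto
  then obtain a b where ab: "(a,b)\<in>C" "s = sh a" "e = sh b" using D0_iff assms(1) by blast
  then have nS: "(a,b) \<notin> Sch n k C" using shE assms by simp
  have cb: "a < b" "1 \<le> a" "b \<le> 2*n" "a + k \<le> b" using Cb[OF ab(1)] by auto
  have "(a \<le> k \<and> b \<le> 2*n-k) \<or> (k < a \<and> 2*n-k < b)"
  proof (cases "a \<le> k")
    case True then show ?thesis using nS Sch_iff[of a b] ab by auto
  next
    case False then show ?thesis using cb twod kn by auto
  qed
  then have X: "(s = a \<and> e = b+1 \<and> b \<le> 2*n-k) \<or> (s = a+1 \<and> e = b+2 \<and> k < a)"
    using ab sh_L sh_M sh_R cb twod kn by auto
  then show "s+k+1 \<le> e" "k+1 < e" using cb k0 by auto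
  assume "s \<le> k"
  then have "s = a" "b \<le> 2*n-k" using X by auto
  then show "s \<in> fst ` LM" using ab unfolding LM_def by force
qed

lemma unsh: assumes "1 \<le> q" "q \<le> 2*n+2" "q \<noteq> k+1" "q \<noteq> e0"
  shows "\<exists>q'. 1 \<le> q' \<and> q' \<le> 2*n \<and> sh q' = q"
proof (cases "q \<le> k")
  case True then show ?thesis using assms kn by (intro exI[of _ q]) (simp add: shift_def)
next
  case False
  show ?thesis
  proof (cases "q \<le> 2*n-k+1")
    case True
    have "k < q-1" "q-1 \<le> 2*n-k" using True False assms by auto
    then have "sh (q-1) = q" unfolding shift_def using False by simp
    moreover have "1 \<le> q-1" "q-1 \<le> 2*n" using True False assms kn k0 by linarith+
    ultimately show ?thesis by blast
  next
    case False2: False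
    have "2*n-k < q-2" "q-2 \<le> 2*n" using False2 assms kn by auto
    moreover have "k < q-2" "2 \<le> q" using False2 kn assms by linarith+
    ultimately have "sh (q-2) = q" unfolding shift_def by simp
    moreover have "1 \<le> q-2" "q-2 \<le> 2*n" using False2 assms kn k0 by linarith+
    ultimately show ?thesis by blast
  qed
qed

lemma D0_diag: "is_diagram (n+1) D0"
  unfolding is_diagram_def
proof (rule conjI; intro ballI)
  fix x assume "x \<in> D0"
  then obtain s e where x: "x = (s,e)" "(s,e) \<in> D0" by (cases x) auto
  then consider "(s,e) = (k+1,e0)" | a b where "(a,b)\<in>C" "s = sh a" "e = sh b" using D0_iff by blast
  then show "fst x < snd x \<and> fst x \<in> {1..2*(n+1)} \<and> snd x \<in> {1..2*(n+1)}"
  proof cases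
    case 1 then show ?thesis using x kn by auto
  next
    case 2
    have "sh a \<ge> 1" "sh b \<le> 2*n+2" using Cb[OF 2(1)] unfolding shift_def by auto
    then show ?thesis using x 2 sh_mono[of a b] Cb[OF 2(1)] by auto
  qed
next
  fix q assume q: "q \<in> {1..2*(n+1)}"
  show "\<exists>!x\<in>D0. q = fst x \<or> q = snd x"
  proof (cases "q = k+1 \<or> q = e0")
    case True
    show ?thesis
    proof (rule ex1I[of _ "(k+1,e0)"])
      show "(k+1,e0) \<in> D0 \<and> (q = fst (k+1,e0) \<or> q = snd (k+1,e0))" using True D0_iff by auto
    next
      fix y assume y: "y \<in> D0 \<and> (q = fst y \<or> q = snd y)"
      obtain s e where se: "y = (s,e)" by (cases y) auto
      show "y = (k+1,e0)"
      proof (rule ccontr)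
        assume "y \<noteq> (k+1,e0)"
        then obtain a b where ab: "s = sh a" "e = sh b" using D0_iff y se by auto
        have neq: "sh a \<noteq> k+1" "sh b \<noteq> k+1" "sh a \<noteq> e0" "sh b \<noteq> e0"
          using sh_ne1 sh_ne2 by blast+
        have "q = sh a \<or> q = sh b" using y se ab by auto
        then show False using True neq by (elim disjE) simp_all
      qed
    qed
  next
    case False
    then obtain q' where q': "1 \<le> q'" "q' \<le> 2*n" "sh q' = q" using unsh q by auto
    obtain a b where ab: "(a,b) \<in> C" "q' = a \<or> q' = b" using diag_cov[OF Cdiag q'(1,2)] by blast
    show ?thesis
    proof (rule ex1I[of _ "(sh a, sh b)"])
      show "(sh a, sh b) \<in> D0 \<and> (q = fst (sh a, sh b) \<or> q = snd (sh a, sh b))"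
        using ab q' D0_iff by auto
    next
      fix y assume y: "y \<in> D0 \<and> (q = fst y \<or> q = snd y)"
      obtain s e where se: "y = (s,e)" by (cases y) auto
      have "y \<noteq> (k+1,e0)" using False y se by auto
      then obtain a' b' where a'b': "(a',b') \<in> C" "s = sh a'" "e = sh b'" using D0_iff y se by auto
      have "q' = a' \<or> q' = b'" using y se a'b' q'(3) sh_inj by auto
      then have "a = a' \<and> b = b'" using Cuniq[OF ab(1) a'b'(1) ab(2)] by simp
      then show "y = (sh a, sh b)" using se a'b' by simp
    qed
  qed
qed

lemma F6: "i \<le> card {d \<in> D0. snd d \<in> E \<and> fst d < k+1}"
proof -
  let ?f = "\<lambda>(a,b). (sh a, sh b)"
  have sub: "?f ` Sch n k C \<subseteq> {d \<in> D0. snd d \<in> E \<and> fst d < k+1}"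
  proof
    fix x assume "x \<in> ?f ` Sch n k C"
    then obtain a b where ab: "(a,b) \<in> Sch n k C" "x = (sh a, sh b)" by force
    then show "x \<in> {d \<in> D0. snd d \<in> E \<and> fst d < k+1}"
      using Sch_iff[of a b] D0_iff sh_L[of a] by force
  qed
  have inj: "inj_on ?f (Sch n k C)"
    by (rule inj_onI) (auto dest: sh_inj)
  have fin: "finite D0" using diag_finite[OF D0_diag] .
  have "i \<le> card (Sch n k C)" using count_LM ii twod by linarith
  also have "\<dots> = card (?f ` Sch n k C)" using card_image[OF inj] by simp
  also have "\<dots> \<le> card {d \<in> D0. snd d \<in> E \<and> fst d < k+1}"
    by (rule card_mono) (use fin sub in auto)
  finally show ?thesis .
qed


definition Inv where
  "Inv D cnt \<longleftrightarrow> is_diagram (n+1) D \<and> (\<forall>s e. (s,e)\<in>D \<and> e\<in>E \<longrightarrow> s+k+1 \<le> e)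
     \<and> (\<forall>s e. (s,e)\<in>D \<and> e\<notin>E \<and> e\<noteq>e0 \<longrightarrow> (s,e)\<in>D0)
     \<and> (\<exists>x. (x,e0)\<in>D \<and> x \<le> k+1 \<and> card {d\<in>D. snd d\<in>E \<and> fst d<x} = cnt
            \<and> (\<forall>s e. (s,e)\<in>D \<and> e\<in>E \<and> s<x \<longrightarrow> s+k+2 \<le> e))"

lemma Inv0: "Inv D0 (card {d \<in> D0. snd d \<in> E \<and> fst d < k+1})"
  unfolding Inv_def
proof (intro conjI allI impI)
  show "is_diagram (n+1) D0" by (rule D0_diag)
next
  fix s e assume "(s,e)\<in>D0 \<and> e\<in>E" then show "s+k+1 \<le> e" using F3 by fastforce
next
  fix s e assume "(s,e)\<in>D0 \<and> e\<notin>E \<and> e\<noteq>e0" then show "(s,e)\<in>D0" by blast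
next
  show "\<exists>x. (x,e0)\<in>D0 \<and> x \<le> k+1 \<and> card {d\<in>D0. snd d\<in>E \<and> fst d<x} = card {d \<in> D0. snd d \<in> E \<and> fst d < k+1}
            \<and> (\<forall>s e. (s,e)\<in>D0 \<and> e\<in>E \<and> s<x \<longrightarrow> s+k+2 \<le> e)"
  proof (intro exI[of _ "k+1"] conjI allI impI)
    show "(k+1,e0) \<in> D0" using D0_iff by simp
    show "k+1 \<le> k+1" by simp
    show "card {d\<in>D0. snd d\<in>E \<and> fst d<k+1} = card {d \<in> D0. snd d \<in> E \<and> fst d < k+1}" by (rule refl)
  next
    fix s e assume "(s,e)\<in>D0 \<and> e\<in>E \<and> s<k+1" then show "s+k+2 \<le> e" using F3 by blast
  qed
qed

lemma step:
  assumes inv: "Inv D cnt" and cpos: "0 < cnt"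
  shows "Inv (swap_step E e0 D) (cnt - 1)"
proof -
  from inv obtain x where
   Dd: "is_diagram (n+1) D" and I2: "\<forall>s e. (s,e)\<in>D \<and> e\<in>E \<longrightarrow> s+k+1 \<le> e"
   and I3: "\<forall>s e. (s,e)\<in>D \<and> e\<notin>E \<and> e\<noteq>e0 \<longrightarrow> (s,e)\<in>D0"
   and x: "(x,e0)\<in>D" "x \<le> k+1" and cntx: "card {d\<in>D. snd d\<in>E \<and> fst d<x} = cnt"
   and I4: "\<forall>s e. (s,e)\<in>D \<and> e\<in>E \<and> s<x \<longrightarrow> s+k+2 \<le> e"
    unfolding Inv_def by blast
  have finD: "finite D" by (rule diag_finite[OF Dd])
  have e0E: "e0 \<notin> E" by (rule e0_notin)
  have theX: "(THE s. (s,e0)\<in>D) = x"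
  proof (rule the_equality)
    show "(x,e0) \<in> D" by (rule x(1))
  next
    fix s assume "(s,e0)\<in>D"
    then have "(s,e0) = (x,e0)" using diag_uniq[OF Dd _ x(1), of "(s,e0)" e0] by simp
    then show "s = x" by simp
  qed
  let ?P = "{s. \<exists>e\<in>E. (s,e)\<in>D \<and> s<x}"
  have finP: "finite ?P" by (rule finite_subset[of _ "{..<x}"]) auto
  have "{d\<in>D. snd d\<in>E \<and> fst d<x} \<noteq> {}"
  proof
    assume "{d\<in>D. snd d\<in>E \<and> fst d<x} = {}"
    then have "cnt = 0" using cntx by (simp only: card.empty)
    then show False using cpos by simp
  qed
  then obtain d where d: "d\<in>D" "snd d\<in>E" "fst d<x" by blast
  have "fst d \<in> ?P" using d by (intro CollectI bexI[of _ "snd d"]) auto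
  then have neP: "?P \<noteq> {}" by blast
  define p where "p = Max ?P"
  have "p \<in> ?P" unfolding p_def using Max_in[OF finP neP] .
  then obtain ep where ep: "ep\<in>E" "(p,ep)\<in>D" "p<x" by blast
  have maxp: "\<And>s e. (s,e)\<in>D \<Longrightarrow> e\<in>E \<Longrightarrow> s<x \<Longrightarrow> s \<le> p"
  proof -
    fix s e assume "(s,e)\<in>D" "e\<in>E" "s<x"
    then have "s \<in> ?P" by blast
    then show "s \<le> p" unfolding p_def using Max_ge[OF finP] by blast
  qed
  have theE: "(THE e. (p,e)\<in>D) = ep"
  proof (rule the_equality)
    show "(p,ep) \<in> D" by (rule ep(2))
  next
    fix e assume "(p,e)\<in>D"
    then have "(p,e) = (p,ep)" using diag_uniq[OF Dd _ ep(2), of "(p,e)" p] by simp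
    then show "e = ep" by simp
  qed
  have sw: "swap_step E e0 D = D - {(x,e0),(p,ep)} \<union> {(p,e0),(x,ep)}"
    unfolding swap_step_def Let_def theX p_def[symmetric] theE by (rule refl)
  have epge: "2*n-k+3 \<le> ep" using E_ge ep(1) by blast
  have xe0: "x < e0" using diag_bnd(1)[OF Dd x(1)] .
  have xe: "x + k + 1 \<le> ep"
  proof (cases "x = p+1")
    case True then show ?thesis using I4 ep by force
  next
    case False
    define q where "q = x - 1"
    have qp: "p < q" "q < x" using False ep(3) unfolding q_def by auto
    have q1: "1 \<le> q" "q \<le> 2*(n+1)" using qp x(2) kn by auto
    obtain a b where ab: "(a,b)\<in>D" "q = a \<or> q = b" using diag_cov[OF Dd q1] by blast
    have "q \<in> fst ` LM"
    proof (cases "b \<in> E")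
      case True
      have "2*n-k+3 \<le> b" using E_ge True by blast
      then have "q = a" using ab(2) qp x(2) kn by auto
      then have "a \<le> p" using maxp[OF ab(1) True] qp by simp
      then show ?thesis using \<open>q = a\<close> qp by simp
    next
      case False2: False
      show ?thesis
      proof (cases "b = e0")
        case True
        then have "(a,b) = (x,e0)" using diag_uniq[OF Dd ab(1) x(1), of b] by simp
        then show ?thesis using ab(2) qp x(2) kn by auto
      next
        case False3: False
        have D0ab: "(a,b) \<in> D0" using I3 ab(1) False2 False3 by blast
        have "k+1 < b" by (rule F4(2)[OF D0ab False2 False3])
        then have "q = a" using ab(2) qp x(2) by auto
        then have "a \<le> k" using qp x(2) by simp
        then show ?thesis using F4(3)[OF D0ab False2 False3] \<open>q = a\<close> by simp
      qed
    qed
    then obtain b' where "(q,b') \<in> LM" by force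
    then have "q \<le> 2*(n-k)" using LM_fst by blast
    then have "x \<le> 2*(n-k)+1" using qp unfolding q_def by simp
    then show ?thesis using epge kn by linarith
  qed
  have ne: "(x,e0) \<noteq> (p,ep)" using ep(3) by simp
  have Dd': "is_diagram (n+1) (D - {(x,e0),(p,ep)} \<union> {(p,e0),(x,ep)})"
    by (rule diag_swap[OF Dd x(1) ep(2) ne]) (use ep(3) xe0 xe in auto)
  let ?D' = "D - {(x,e0),(p,ep)} \<union> {(p,e0),(x,ep)}"
  have setq: "{d\<in>D. snd d\<in>E \<and> fst d<x} = insert (p,ep) {d\<in>D. snd d\<in>E \<and> fst d<p}"
  proof
    show "{d\<in>D. snd d\<in>E \<and> fst d<x} \<subseteq> insert (p,ep) {d\<in>D. snd d\<in>E \<and> fst d<p}"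
    proof
      fix d assume dd: "d \<in> {d\<in>D. snd d\<in>E \<and> fst d<x}"
      obtain s e where se: "d = (s,e)" by (cases d) auto
      have "s \<le> p" using maxp[of s e] dd se by auto
      show "d \<in> insert (p,ep) {d\<in>D. snd d\<in>E \<and> fst d<p}"
      proof (cases "s = p")
        case True
        then have "(s,e) = (p,ep)" using diag_uniq[OF Dd _ ep(2), of "(s,e)" p] dd se by simp
        then show ?thesis using se by simp
      next
        case False then show ?thesis using \<open>s \<le> p\<close> dd se by auto
      qed
    qed
  next
    show "insert (p,ep) {d\<in>D. snd d\<in>E \<and> fst d<p} \<subseteq> {d\<in>D. snd d\<in>E \<and> fst d<x}"
      using ep by auto
  qed
  have setq2: "{d\<in>?D'. snd d\<in>E \<and> fst d<p} = {d\<in>D. snd d\<in>E \<and> fst d<p}"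
    using e0E ep(3) by auto
  have finA: "finite {d\<in>D. snd d\<in>E \<and> fst d<p}" using finD by simp
  have "card {d\<in>D. snd d\<in>E \<and> fst d<x} = Suc (card {d\<in>D. snd d\<in>E \<and> fst d<p})"
    unfolding setq by (rule card_insert_disjoint[OF finA]) simp
  then have cnew: "card {d\<in>?D'. snd d\<in>E \<and> fst d<p} = cnt - 1" using cntx setq2 by simp
  show ?thesis unfolding sw Inv_def
  proof (intro conjI allI impI)
    show "is_diagram (n+1) ?D'" by (rule Dd')
  next
    fix s e assume h: "(s,e)\<in>?D' \<and> e\<in>E"
    then consider "(s,e)\<in>D" | "(s,e) = (p,e0)" | "(s,e) = (x,ep)" by blast
    then show "s+k+1 \<le> e"
    proof cases
      case 1 then show ?thesis using I2 h by blast
    next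
      case 2 then show ?thesis using h e0E by simp
    next
      case 3 then show ?thesis using xe by simp
    qed
  next
    fix s e assume h: "(s,e)\<in>?D' \<and> e\<notin>E \<and> e\<noteq>e0"
    then have "(s,e)\<in>D" using ep(1) by auto
    then show "(s,e)\<in>D0" using I3 h by blast
  next
    show "\<exists>x'. (x',e0)\<in>?D' \<and> x' \<le> k+1 \<and> card {d\<in>?D'. snd d\<in>E \<and> fst d<x'} = cnt - 1
            \<and> (\<forall>s e. (s,e)\<in>?D' \<and> e\<in>E \<and> s<x' \<longrightarrow> s+k+2 \<le> e)"
    proof (intro exI[of _ p] conjI allI impI)
      show "(p,e0) \<in> ?D'" by simp
      show "p \<le> k+1" using ep(3) x(2) by simp
      show "card {d\<in>?D'. snd d\<in>E \<and> fst d<p} = cnt - 1" by (rule cnew)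
    next
      fix s e assume h: "(s,e)\<in>?D' \<and> e\<in>E \<and> s<p"
      then have "(s,e)\<in>D" using e0E ep(3) by auto
      then show "s+k+2 \<le> e" using I4 h ep(3) by auto
    qed
  qed
qed

lemma final:
  assumes inv: "Inv D i"
  shows "D \<in> K (k+1) (n+1)"
proof -
  from inv obtain x where
   Dd: "is_diagram (n+1) D" and I2: "\<forall>s e. (s,e)\<in>D \<and> e\<in>E \<longrightarrow> s+k+1 \<le> e"
   and I3: "\<forall>s e. (s,e)\<in>D \<and> e\<notin>E \<and> e\<noteq>e0 \<longrightarrow> (s,e)\<in>D0"
   and x: "(x,e0)\<in>D" "x \<le> k+1" and cntx: "card {d\<in>D. snd d\<in>E \<and> fst d<x} = i"
    unfolding Inv_def by blast
  have finD: "finite D" by (rule diag_finite[OF Dd])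
  let ?A = "{d\<in>D. snd d\<in>E \<and> fst d<x}"
  have sub: "{1..x-1} \<subseteq> fst ` ?A \<union> fst ` LM"
  proof
    fix q assume q: "q \<in> {1..x-1}"
    have q1: "1 \<le> q" "q \<le> 2*(n+1)" using q x(2) kn by auto
    obtain a b where ab: "(a,b)\<in>D" "q = a \<or> q = b" using diag_cov[OF Dd q1] by blast
    show "q \<in> fst ` ?A \<union> fst ` LM"
    proof (cases "b \<in> E")
      case True
      have "2*n-k+3 \<le> b" using E_ge True by blast
      then have "q = a" using ab(2) q x(2) kn by auto
      then have "(a,b) \<in> ?A" using ab(1) True q by auto
      then show ?thesis using \<open>q = a\<close> by force
    next
      case False2: False
      show ?thesis
      proof (cases "b = e0")
        case True
        then have "(a,b) = (x,e0)" using diag_uniq[OF Dd ab(1) x(1), of b] by simp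
        then show ?thesis using ab(2) q x(2) kn by auto
      next
        case False3: False
        have D0ab: "(a,b) \<in> D0" using I3 ab(1) False2 False3 by blast
        have "k+1 < b" by (rule F4(2)[OF D0ab False2 False3])
        then have "q = a" using ab(2) q x(2) by auto
        then have "a \<le> k" using q x(2) by auto
        then show ?thesis using F4(3)[OF D0ab False2 False3] \<open>q = a\<close> by simp
      qed
    qed
  qed
  have finLM: "finite LM" using Cfin unfolding LM_def by simp
  have "x - 1 = card {1..x-1}" by simp
  also have "\<dots> \<le> card (fst ` ?A \<union> fst ` LM)" by (rule card_mono) (use sub finD finLM in auto)
  also have "\<dots> \<le> card (fst ` ?A) + card (fst ` LM)" by (rule card_Un_le)
  also have "\<dots> \<le> card ?A + card LM" by (intro add_mono card_image_le) (use finD finLM in auto)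
  also have "\<dots> \<le> i + (n-k)" using cntx count_LM by simp
  finally have xb: "x \<le> 2*(n-k)+1" using ii by linarith
  show ?thesis unfolding K_def
  proof (intro CollectI conjI ballI)
    show "is_diagram (n+1) D" by (rule Dd)
  next
    fix c assume c: "c \<in> D"
    obtain s e where se: "c = (s,e)" by (cases c) auto
    show "k+1 \<le> snd c - fst c"
    proof (cases "e \<in> E")
      case True then show ?thesis using I2 c se by force
    next
      case False2: False
      show ?thesis
      proof (cases "e = e0")
        case True
        then have "(s,e) = (x,e0)" using diag_uniq[OF Dd _ x(1), of "(s,e)" e] c se by simp
        then show ?thesis using se xb kn twod by auto
      next
        case False3: False
        have "(s,e) \<in> D0" using I3 c se False2 False3 by blast
        then have "s+k+1 \<le> e" using F4(1) False2 False3 by blast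
        then show ?thesis using se by simp
      qed
    qed
  qed
qed

lemma iter_gen:
  assumes st: "\<And>D c. Inv D c \<Longrightarrow> 0 < c \<Longrightarrow> Inv (f D) (c - 1)" and i0: "Inv D1 m"
  shows "t \<le> m \<Longrightarrow> Inv ((f ^^ t) D1) (m - t)"
proof (induction t)
  case 0 then show ?case using i0 by simp
next
  case (Suc t)
  have h: "Inv ((f ^^ t) D1) (m - t)" using Suc.IH Suc.prems by simp
  have p: "0 < m - t" using Suc.prems by simp
  have "Inv (f ((f ^^ t) D1)) (m - t - 1)" by (rule st[OF h p])
  moreover have "m - t - 1 = m - Suc t" by simp
  moreover have "(f ^^ Suc t) D1 = f ((f ^^ t) D1)" by simp
  ultimately show ?case by simp
qed

lemma main: "alpha n k i C \<in> K (k+1) (n+1)"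
proof -
  let ?m = "card {d \<in> D0. snd d \<in> E \<and> fst d < k+1}"
  have a: "alpha n k i C = (swap_step E e0 ^^ (?m - i)) D0"
    unfolding alpha_def Let_def by (rule refl)
  have "Inv ((swap_step E e0 ^^ (?m - i)) D0) (?m - (?m - i))"
    by (rule iter_gen[OF step Inv0]) simp_all
  moreover have "?m - (?m - i) = i" using F6 by simp
  ultimately show ?thesis using a final by simp
qed

end

theorem lemma4:
  fixes n k i :: nat
  assumes "0 < k" and "k \<le> n" and "3 * (n - k) \<le> n" and "i \<le> n - k"
    and "C \<in> K k n"
  shows "alpha n k i C \<in> K (k+1) (n+1)"
proof -
  interpret L4 n k i C using assms by unfold_locales
  show ?thesis by (rule main)
qed

end
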